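(* The classes of weakly Hausdorff spaces, of weakly Hausdorff compact spaces, of weakly Hausdorff sober spaces, and of weakly Hausdorff compact sober spaces are not $\omega$-projective. Moreover, there is an ep-system $(p_{mn}\colon X_n\to X_m)_{m\le n\in\mathbb N}$ of weakly Hausdorff compact sober spaces whose projective limit in the category of topological spaces is not weakly Hausdorff.
   Context: A projective system of topological spaces consists of a directed preordered set $(I,\sqsubseteq)$, spaces $X_i$ and continuous maps $p_{ij}\colon X_j\to X_i$ for $i\sqsubseteq j$ with $p_{ii}=\mathrm{id}$ and $p_{ij}\circ p_{jk}=p_{ik}$; its projective limit is its limit in the category of topological spaces. A class is $\omega$-projective if it is closed under projective limits of systems whose index set has a countable cofinal subset. The specialization preorder is $x\le y$ iff every open neighbourhood of $x$ contains $y$; $\uparrow x$ is the set of points above $x$. A space is weakly Hausdorff if for any two points $x,y$ and every open neighbourhood $W$ of $\uparrow x\cap\uparrow y$ there are open neighbourhoods $U$ of $x$ and $V$ of $y$ with $U\cap V\subseteq W$. Sober: $T_0$ and every irreducible closed set is the closure of a point. A continuous map $p\colon Y\to X$ is a projection if there is a continuous $e\colon X\to Y$ with $p\circ e=\mathrm{id}_X$ and $e\circ p\le\mathrm{id}_Y$ pointwise in the specialization preorder of $Y$; an ep-system is a projective system whose bonding maps $p_{ij}$ are projections. *)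

theory Defs
  imports "HOL-Analysis.Analysis"
begin

definition spec_le :: "'a topology \<Rightarrow> 'a \<Rightarrow> 'a \<Rightarrow> bool" where
  "spec_le X x y \<longleftrightarrow> x \<in> topspace X \<and> y \<in> topspace X \<and>
     (\<forall>U. openin X U \<and> x \<in> U \<longrightarrow> y \<in> U)"

definition upset :: "'a topology \<Rightarrow> 'a \<Rightarrow> 'a set" where
  "upset X x = {y \<in> topspace X. spec_le X x y}"

definition weakly_hausdorff :: "'a topology \<Rightarrow> bool" where
  "weakly_hausdorff X \<longleftrightarrow>
     (\<forall>x\<in>topspace X. \<forall>y\<in>topspace X. \<forall>W. openin X W \<and> upset X x \<inter> upset X y \<subseteq> W \<longrightarrow>
        (\<exists>U V. openin X U \<and> openin X V \<and> x \<in> U \<and> y \<in> V \<and> U \<inter> V \<subseteq> W))"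

definition irreducible_closed :: "'a topology \<Rightarrow> 'a set \<Rightarrow> bool" where
  "irreducible_closed X C \<longleftrightarrow> closedin X C \<and> C \<noteq> {} \<and>
     (\<forall>A B. closedin X A \<and> closedin X B \<and> C \<subseteq> A \<union> B \<longrightarrow> C \<subseteq> A \<or> C \<subseteq> B)"

definition sober :: "'a topology \<Rightarrow> bool" where
  "sober X \<longleftrightarrow> t0_space X \<and>
     (\<forall>C. irreducible_closed X C \<longrightarrow> (\<exists>x\<in>topspace X. C = X closure_of {x}))"

definition proj_system ::
  "'i set \<Rightarrow> ('i \<Rightarrow> 'i \<Rightarrow> bool) \<Rightarrow> ('i \<Rightarrow> 'a topology) \<Rightarrow> ('i \<Rightarrow> 'i \<Rightarrow> 'a \<Rightarrow> 'a) \<Rightarrow> bool" where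
  "proj_system I le X p \<longleftrightarrow>
     (\<forall>i\<in>I. le i i) \<and>
     (\<forall>i\<in>I. \<forall>j\<in>I. \<forall>k\<in>I. le i j \<and> le j k \<longrightarrow> le i k) \<and>
     I \<noteq> {} \<and> (\<forall>i\<in>I. \<forall>j\<in>I. \<exists>k\<in>I. le i k \<and> le j k) \<and>
     (\<forall>i\<in>I. \<forall>j\<in>I. le i j \<longrightarrow> continuous_map (X j) (X i) (p i j)) \<and>
     (\<forall>i\<in>I. \<forall>x\<in>topspace (X i). p i i x = x) \<and>
     (\<forall>i\<in>I. \<forall>j\<in>I. \<forall>k\<in>I. le i j \<and> le j k \<longrightarrow>
        (\<forall>x\<in>topspace (X k). p i j (p j k x) = p i k x))"

definition proj_limit ::
  "'i set \<Rightarrow> ('i \<Rightarrow> 'i \<Rightarrow> bool) \<Rightarrow> ('i \<Rightarrow> 'a topology) \<Rightarrow> ('i \<Rightarrow> 'i \<Rightarrow> 'a \<Rightarrow> 'a) \<Rightarrow> ('i \<Rightarrow> 'a) topology" where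
  "proj_limit I le X p = subtopology (product_topology X I)
     {x \<in> topspace (product_topology X I). \<forall>i\<in>I. \<forall>j\<in>I. le i j \<longrightarrow> p i j (x j) = x i}"

definition is_projection :: "'a topology \<Rightarrow> 'a topology \<Rightarrow> ('a \<Rightarrow> 'a) \<Rightarrow> bool" where
  "is_projection Y X q \<longleftrightarrow> continuous_map Y X q \<and>
     (\<exists>e. continuous_map X Y e \<and> (\<forall>x\<in>topspace X. q (e x) = x) \<and>
          (\<forall>y\<in>topspace Y. spec_le Y (e (q y)) y))"

definition ep_system ::
  "'i set \<Rightarrow> ('i \<Rightarrow> 'i \<Rightarrow> bool) \<Rightarrow> ('i \<Rightarrow> 'a topology) \<Rightarrow> ('i \<Rightarrow> 'i \<Rightarrow> 'a \<Rightarrow> 'a) \<Rightarrow> bool" where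
  "ep_system I le X p \<longleftrightarrow> proj_system I le X p \<and>
     (\<forall>i\<in>I. \<forall>j\<in>I. le i j \<longrightarrow> is_projection (X j) (X i) (p i j))"

text \<open>omega-projectivity of a class (given at the carrier type by C and at the limit type by C').
  Only the canonical limit is tested; all classes considered are homeomorphism invariant.\<close>
definition omega_projective ::
  "('a topology \<Rightarrow> bool) \<Rightarrow> (('i \<Rightarrow> 'a) topology \<Rightarrow> bool) \<Rightarrow> bool" where
  "omega_projective C C' \<longleftrightarrow>
     (\<forall>(I::'i set) le X p. proj_system I le X p \<and>
        (\<exists>D\<subseteq>I. countable D \<and> (\<forall>i\<in>I. \<exists>d\<in>D. le i d)) \<and> (\<forall>i\<in>I. C (X i))
        \<longrightarrow> C' (proj_limit I le X p))"

end

theory Submission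
  imports Defs
begin


definition alex :: "'b set set \<Rightarrow> 'b set topology" where
  "alex S = topology (\<lambda>U. U \<subseteq> S \<and> (\<forall>x\<in>U. \<forall>y\<in>S. x \<subseteq> y \<longrightarrow> y \<in> U))"

lemma alex_open: "openin (alex S) U \<longleftrightarrow> U \<subseteq> S \<and> (\<forall>x\<in>U. \<forall>y\<in>S. x \<subseteq> y \<longrightarrow> y \<in> U)"
proof -
  have "istopology (\<lambda>U. U \<subseteq> S \<and> (\<forall>x\<in>U. \<forall>y\<in>S. x \<subseteq> y \<longrightarrow> y \<in> U))"
    unfolding istopology_def by blast
  then show ?thesis unfolding alex_def by simp
qed

lemma alex_topspace[simp]: "topspace (alex S) = S"
proof -
  have "openin (alex S) S" by (simp add: alex_open)
  then have "S \<subseteq> topspace (alex S)" by (simp add: openin_subset)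
  moreover have "topspace (alex S) \<subseteq> S"
    unfolding topspace_def using alex_open by blast
  ultimately show ?thesis by blast
qed

lemma alex_up_open: "openin (alex S) {y\<in>S. x \<subseteq> y}"
  by (auto simp: alex_open)

lemma alex_spec_le: "spec_le (alex S) x y \<longleftrightarrow> x\<in>S \<and> y\<in>S \<and> x \<subseteq> y"
proof
  assume "spec_le (alex S) x y"
  then have h: "x\<in>S" "y\<in>S" "\<And>U. openin (alex S) U \<Longrightarrow> x \<in> U \<Longrightarrow> y \<in> U"
    unfolding spec_le_def alex_topspace by auto
  have "y \<in> {z\<in>S. x \<subseteq> z}" by (rule h(3)[OF alex_up_open[of S x]]) (simp add: h(1))
  then have "x \<subseteq> y" by blast
  then show "x\<in>S \<and> y\<in>S \<and> x \<subseteq> y" using h(1,2) by blast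
next
  assume "x\<in>S \<and> y\<in>S \<and> x \<subseteq> y"
  then show "spec_le (alex S) x y" unfolding spec_le_def alex_topspace by (auto simp: alex_open)
qed

lemma alex_upset: "upset (alex S) x = {y\<in>S. spec_le (alex S) x y}"
  by (simp add: upset_def)

lemma alex_wh: "weakly_hausdorff (alex S)"
  unfolding weakly_hausdorff_def alex_topspace
proof (intro ballI allI impI)
  fix x y W assume x: "x \<in> S" and y: "y \<in> S" and W: "openin (alex S) W \<and> upset (alex S) x \<inter> upset (alex S) y \<subseteq> W"
  show "\<exists>U V. openin (alex S) U \<and> openin (alex S) V \<and> x \<in> U \<and> y \<in> V \<and> U \<inter> V \<subseteq> W"
    apply (rule exI[of _ "{z\<in>S. x \<subseteq> z}"], rule exI[of _ "{z\<in>S. y \<subseteq> z}"])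
    using W x y by (auto simp: alex_up_open alex_upset alex_spec_le)
qed

lemma alex_closed: "closedin (alex S) C \<longleftrightarrow> C \<subseteq> S \<and> (\<forall>y\<in>C. \<forall>x\<in>S. x \<subseteq> y \<longrightarrow> x \<in> C)"
proof -
  have "closedin (alex S) C \<longleftrightarrow> C \<subseteq> S \<and> (\<forall>x\<in>S - C. \<forall>y\<in>S. x \<subseteq> y \<longrightarrow> y \<in> S - C)"
    unfolding closedin_def alex_topspace alex_open by simp
  also have "\<dots> \<longleftrightarrow> C \<subseteq> S \<and> (\<forall>y\<in>C. \<forall>x\<in>S. x \<subseteq> y \<longrightarrow> x \<in> C)"
  proof (intro conj_cong refl iffI ballI impI)
    fix y x assume H: "\<forall>x\<in>S - C. \<forall>y\<in>S. x \<subseteq> y \<longrightarrow> y \<in> S - C" and "C \<subseteq> S" "y \<in> C" "x \<in> S" "x \<subseteq> y"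
    show "x \<in> C"
    proof (rule ccontr)
      assume "x \<notin> C"
      then have "y \<in> S - C" using H \<open>x \<in> S\<close> \<open>x \<subseteq> y\<close> \<open>y \<in> C\<close> \<open>C \<subseteq> S\<close> by blast
      then show False using \<open>y \<in> C\<close> by blast
    qed
  next
    fix x y assume H: "\<forall>y\<in>C. \<forall>x\<in>S. x \<subseteq> y \<longrightarrow> x \<in> C" and "C \<subseteq> S" "x \<in> S - C" "y \<in> S" "x \<subseteq> y"
    then show "y \<in> S - C" by blast
  qed
  finally show ?thesis .
qed

lemma alex_closure: "x \<in> S \<Longrightarrow> (alex S) closure_of {x} = {y\<in>S. y \<subseteq> x}"
  apply (rule closure_of_unique)
    apply simp
   apply (auto simp: alex_closed)
  done

lemma alex_cont:
  assumes "\<And>x. x \<in> S \<Longrightarrow> f x \<in> T" "\<And>x y. x \<in> S \<Longrightarrow> y \<in> S \<Longrightarrow> x \<subseteq> y \<Longrightarrow> f x \<subseteq> f y"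
  shows "continuous_map (alex S) (alex T) f"
  unfolding continuous_map_def alex_topspace alex_open using assms by blast

lemma alex_t0: "t0_space (alex S)"
  unfolding t0_space_def alex_topspace
proof (intro ballI impI)
  fix x y assume "x \<in> S" "y \<in> S" "x \<noteq> y"
  then show "\<exists>U. openin (alex S) U \<and> (x \<notin> U) = (y \<in> U)"
  proof (cases "x \<subseteq> y")
    case True
    then have "\<not> y \<subseteq> x" using \<open>x \<noteq> y\<close> by blast
    then show ?thesis using alex_up_open[of S y] \<open>x \<in> S\<close> \<open>y \<in> S\<close> by blast
  next
    case False
    then show ?thesis using alex_up_open[of S x] \<open>x \<in> S\<close> \<open>y \<in> S\<close> by blast
  qed
qed

lemma alex_compact:
  assumes "finite M" "M \<subseteq> S" "\<And>y. y \<in> S \<Longrightarrow> \<exists>m\<in>M. m \<subseteq> y"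
  shows "compact_space (alex S)"
  unfolding compact_space_alt alex_topspace
proof (intro allI impI)
  fix \<U> assume U: "(\<forall>U\<in>\<U>. openin (alex S) U) \<and> S \<subseteq> \<Union> \<U>"
  have "\<forall>m\<in>M. \<exists>U\<in>\<U>. m \<in> U" using U assms(2) by blast
  then obtain g where g: "\<forall>m\<in>M. g m \<in> \<U> \<and> m \<in> g m" by metis
  show "\<exists>\<F>. finite \<F> \<and> \<F> \<subseteq> \<U> \<and> S \<subseteq> \<Union> \<F>"
  proof (intro exI conjI)
    show "finite (g ` M)" using assms(1) by simp
    show "g ` M \<subseteq> \<U>" using g by blast
    show "S \<subseteq> \<Union> (g ` M)"
    proof
      fix y assume "y \<in> S"
      then obtain m where m: "m \<in> M" "m \<subseteq> y" using assms(3) by blast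
      then have "openin (alex S) (g m)" "m \<in> g m" using g U by auto
      then have "y \<in> g m" using m \<open>y \<in> S\<close> by (auto simp: alex_open)
      then show "y \<in> \<Union> (g ` M)" using m by blast
    qed
  qed
qed

lemma alex_sober:
  assumes "\<And>C. C \<subseteq> S \<Longrightarrow> C \<noteq> {} \<Longrightarrow> \<exists>m\<in>C. \<forall>w\<in>C. m \<subseteq> w \<longrightarrow> w = m"
  shows "sober (alex S)"
  unfolding sober_def
proof (intro conjI alex_t0 allI impI)
  fix C assume C: "irreducible_closed (alex S) C"
  then have cl: "C \<subseteq> S" "\<And>y x. y \<in> C \<Longrightarrow> x \<in> S \<Longrightarrow> x \<subseteq> y \<Longrightarrow> x \<in> C" "C \<noteq> {}"
    by (auto simp: irreducible_closed_def alex_closed)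
  have dir: "\<exists>w\<in>C. u \<subseteq> w \<and> v \<subseteq> w" if "u \<in> C" "v \<in> C" for u v
  proof (rule ccontr)
    assume "\<not> ?thesis"
    then have "C \<subseteq> (S - {z\<in>S. u \<subseteq> z}) \<union> (S - {z\<in>S. v \<subseteq> z})" using cl(1) by blast
    moreover have "closedin (alex S) (S - {z\<in>S. u \<subseteq> z})" "closedin (alex S) (S - {z\<in>S. v \<subseteq> z})"
      by (auto simp: alex_closed)
    ultimately have "C \<subseteq> (S - {z\<in>S. u \<subseteq> z}) \<or> C \<subseteq> (S - {z\<in>S. v \<subseteq> z})"
      using C unfolding irreducible_closed_def by blast
    then show False using that cl(1) by blast
  qed
  obtain m where m: "m \<in> C" "\<forall>w\<in>C. m \<subseteq> w \<longrightarrow> w = m" using assms[OF cl(1) cl(3)] by blast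
  have "C = {y\<in>S. y \<subseteq> m}"
  proof
    show "C \<subseteq> {y\<in>S. y \<subseteq> m}"
    proof
      fix u assume "u \<in> C"
      then obtain w where "w \<in> C" "u \<subseteq> w" "m \<subseteq> w" using dir m(1) by blast
      then show "u \<in> {y\<in>S. y \<subseteq> m}" using m cl(1) \<open>u \<in> C\<close> by blast
    qed
    show "{y\<in>S. y \<subseteq> m} \<subseteq> C" using cl(2) m(1) by blast
  qed
  then show "\<exists>x\<in>topspace (alex S). C = alex S closure_of {x}"
    using m(1) cl(1) alex_closure[of m S] by auto
qed



definition A :: "nat \<Rightarrow> nat set" where "A i = (\<lambda>j. 3*j) ` {..i}"
definition B :: "nat \<Rightarrow> nat set" where "B i = (\<lambda>j. 3*j+1) ` {..i}"
definition Cc :: "nat \<Rightarrow> nat set" where "Cc k = A k \<union> B k \<union> {3*k+2}"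
definition SS :: "nat \<Rightarrow> nat set set" where "SS n = A ` {..n} \<union> B ` {..n} \<union> range Cc"
definition PP :: "nat \<Rightarrow> nat set \<Rightarrow> nat set" where
  "PP m z = (if z \<in> range Cc then z else z \<inter> {..<3*m+3})"

lemma memA: "x \<in> A i \<longleftrightarrow> x mod 3 = 0 \<and> x div 3 \<le> i"
proof -
  have "x \<in> A i \<longleftrightarrow> (\<exists>j\<le>i. x = 3*j)" unfolding A_def by auto
  also have "\<dots> \<longleftrightarrow> x mod 3 = 0 \<and> x div 3 \<le> i"
  proof
    assume "x mod 3 = 0 \<and> x div 3 \<le> i" then show "\<exists>j\<le>i. x = 3*j"
      by (intro exI[of _ "x div 3"]) auto
  qed auto
  finally show ?thesis .
qed
lemma memB: "x \<in> B i \<longleftrightarrow> x mod 3 = 1 \<and> x div 3 \<le> i"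
proof -
  have "x \<in> B i \<longleftrightarrow> (\<exists>j\<le>i. x = 3*j+1)" unfolding B_def by auto
  also have "\<dots> \<longleftrightarrow> x mod 3 = 1 \<and> x div 3 \<le> i"
  proof
    assume "x mod 3 = 1 \<and> x div 3 \<le> i" then show "\<exists>j\<le>i. x = 3*j+1"
      by (intro exI[of _ "x div 3"]) (auto, presburger)
  qed auto
  finally show ?thesis .
qed
lemma memC: "x \<in> Cc k \<longleftrightarrow> (x mod 3 < 2 \<and> x div 3 \<le> k) \<or> x = 3*k+2"
proof -
  have "x \<in> Cc k \<longleftrightarrow> x \<in> A k \<or> x \<in> B k \<or> x = 3*k+2" unfolding Cc_def by blast
  then show ?thesis unfolding memA memB by presburger
qed

lemma AA[simp]: "A i \<subseteq> A j \<longleftrightarrow> i \<le> j"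
proof
  assume "A i \<subseteq> A j" then have "3*i \<in> A j" using memA[of "3*i" i] by auto
  then show "i \<le> j" by (simp add: memA)
qed (auto simp: memA)
lemma BB[simp]: "B i \<subseteq> B j \<longleftrightarrow> i \<le> j"
proof
  assume "B i \<subseteq> B j" then have "3*i+1 \<in> B j" using memB[of "3*i+1" i] by auto
  then show "i \<le> j" by (simp add: memB)
qed (auto simp: memB)
lemma AC[simp]: "A i \<subseteq> Cc k \<longleftrightarrow> i \<le> k"
proof
  assume "A i \<subseteq> Cc k" then have "3*i \<in> Cc k" using memA[of "3*i" i] by auto
  then show "i \<le> k" unfolding memC by presburger
qed (auto simp: memA memC)
lemma BC[simp]: "B i \<subseteq> Cc k \<longleftrightarrow> i \<le> k"
proof
  assume "B i \<subseteq> Cc k" then have "3*i+1 \<in> Cc k" using memB[of "3*i+1" i] by auto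
  then show "i \<le> k" unfolding memC by presburger
qed (auto simp: memB memC)
lemma AB[simp]: "\<not> A i \<subseteq> B j"
proof
  assume "A i \<subseteq> B j" moreover have "0 \<in> A i" by (simp add: memA) ultimately show False by (auto simp: memB)
qed
lemma BA[simp]: "\<not> B i \<subseteq> A j"
proof
  assume "B i \<subseteq> A j" moreover have "1 \<in> B i" by (simp add: memB) ultimately show False by (auto simp: memA)
qed
lemma C2: "3*k+2 \<in> Cc k" by (simp add: memC)
lemma CA[simp]: "\<not> Cc k \<subseteq> A j"
proof
  assume "Cc k \<subseteq> A j" then have "3*k+2 \<in> A j" using C2 by blast
  then show False unfolding memA by presburger
qed
lemma CB[simp]: "\<not> Cc k \<subseteq> B j"
proof
  assume "Cc k \<subseteq> B j" then have "3*k+2 \<in> B j" using C2 by blast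
  then show False unfolding memB by presburger
qed
lemma CC[simp]: "Cc k \<subseteq> Cc l \<longleftrightarrow> k = l"
proof
  assume "Cc k \<subseteq> Cc l" then have "3*k+2 \<in> Cc l" using C2 by auto
  then show "k = l" unfolding memC by presburger
qed simp

lemma eqA[simp]: "A i = A j \<longleftrightarrow> i = j"
proof
  assume h: "A i = A j"
  have "A i \<subseteq> A j" using h by (rule equalityD1)
  then have 1: "i \<le> j" by simp
  have "A j \<subseteq> A i" using h by (rule equalityD2)
  then have 2: "j \<le> i" by simp
  show "i = j" using 1 2 by simp
qed simp
lemma eqB[simp]: "B i = B j \<longleftrightarrow> i = j"
proof
  assume h: "B i = B j"
  have "B i \<subseteq> B j" using h by (rule equalityD1)
  then have 1: "i \<le> j" by simp
  have "B j \<subseteq> B i" using h by (rule equalityD2)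
  then have 2: "j \<le> i" by simp
  show "i = j" using 1 2 by simp
qed simp
lemma eqC[simp]: "Cc i = Cc j \<longleftrightarrow> i = j"
proof
  assume h: "Cc i = Cc j"
  have "Cc i \<subseteq> Cc j" using h by (rule equalityD1)
  then have 1: "i \<le> j" by simp
  have "Cc j \<subseteq> Cc i" using h by (rule equalityD2)
  then have 2: "j \<le> i" by simp
  show "i = j" using 1 2 by simp
qed simp
lemma neAB[simp]: "A i \<noteq> B j"
proof
  assume h: "A i = B j"
  have 1: "A i \<subseteq> B j" using h by (rule equalityD1)
  have 2: "B j \<subseteq> A i" using h by (rule equalityD2)
  show False using 1 2 by simp
qed
lemma neBA[simp]: "B i \<noteq> A j"
proof
  assume h: "B i = A j"
  have 1: "B i \<subseteq> A j" using h by (rule equalityD1)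
  have 2: "A j \<subseteq> B i" using h by (rule equalityD2)
  show False using 1 2 by simp
qed
lemma neAC[simp]: "A i \<noteq> Cc j"
proof
  assume h: "A i = Cc j"
  have 1: "A i \<subseteq> Cc j" using h by (rule equalityD1)
  have 2: "Cc j \<subseteq> A i" using h by (rule equalityD2)
  show False using 1 2 by simp
qed
lemma neCA[simp]: "Cc i \<noteq> A j"
proof
  assume h: "Cc i = A j"
  have 1: "Cc i \<subseteq> A j" using h by (rule equalityD1)
  have 2: "A j \<subseteq> Cc i" using h by (rule equalityD2)
  show False using 1 2 by simp
qed
lemma neBC[simp]: "B i \<noteq> Cc j"
proof
  assume h: "B i = Cc j"
  have 1: "B i \<subseteq> Cc j" using h by (rule equalityD1)
  have 2: "Cc j \<subseteq> B i" using h by (rule equalityD2)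
  show False using 1 2 by simp
qed
lemma neCB[simp]: "Cc i \<noteq> B j"
proof
  assume h: "Cc i = B j"
  have 1: "Cc i \<subseteq> B j" using h by (rule equalityD1)
  have 2: "B j \<subseteq> Cc i" using h by (rule equalityD2)
  show False using 1 2 by simp
qed

lemma lt3: "(x::nat) < 3*m+3 \<longleftrightarrow> x div 3 \<le> m" by linarith

lemma PA[simp]: "PP m (A i) = A (min i m)"
proof -
  have "A i \<inter> {..<3*m+3} = A (min i m)" by (auto simp: memA lt3)
  then show ?thesis unfolding PP_def by auto
qed
lemma PB[simp]: "PP m (B i) = B (min i m)"
proof -
  have "B i \<inter> {..<3*m+3} = B (min i m)" by (auto simp: memB lt3)
  then show ?thesis unfolding PP_def by auto
qed
lemma PC[simp]: "PP m (Cc k) = Cc k" unfolding PP_def by simp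

lemma SS_cases: "z \<in> SS n \<longleftrightarrow> (\<exists>i\<le>n. z = A i) \<or> (\<exists>i\<le>n. z = B i) \<or> (\<exists>k. z = Cc k)"
  unfolding SS_def by blast

lemma SS_mono: "m \<le> n \<Longrightarrow> SS m \<subseteq> SS n" unfolding SS_def by (intro Un_mono image_mono order_refl) auto

lemma A_SS: "i \<le> n \<Longrightarrow> A i \<in> SS n" unfolding SS_def by (intro UnI1 imageI) simp
lemma B_SS: "i \<le> n \<Longrightarrow> B i \<in> SS n" unfolding SS_def by (intro UnI1 UnI2 imageI) simp
lemma C_SS[simp]: "Cc k \<in> SS n" unfolding SS_def by (intro UnI2 rangeI)

lemma SS_E:
  assumes "z \<in> SS n"
  obtains (a) i where "i \<le> n" "z = A i" | (b) i where "i \<le> n" "z = B i" | (c) k where "z = Cc k"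
  using assms unfolding SS_def by blast

lemma PP_SS: "z \<in> SS n \<Longrightarrow> PP m z \<in> SS m"
  by (erule SS_E) (simp_all add: A_SS B_SS)

lemma PP_sub: "z \<in> SS n \<Longrightarrow> PP m z \<subseteq> z"
  unfolding SS_cases by (elim disjE exE conjE; simp)

lemma C_max: "Cc k \<subseteq> z \<Longrightarrow> z \<in> SS n \<Longrightarrow> z = Cc k"
  unfolding SS_cases by (elim disjE exE conjE; simp)

lemma PP_mono: "x \<in> SS n \<Longrightarrow> y \<in> SS n \<Longrightarrow> x \<subseteq> y \<Longrightarrow> PP m x \<subseteq> PP m y"
  unfolding SS_cases by (elim disjE exE conjE; simp)

lemma PP_comp: "i \<le> j \<Longrightarrow> x \<in> SS n \<Longrightarrow> PP i (PP j x) = PP i x"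
  unfolding SS_cases by (elim disjE exE conjE; simp add: min_def)

lemma PP_id: "x \<in> SS i \<Longrightarrow> PP i x = x"
  unfolding SS_cases by (elim disjE exE conjE; simp add: min_def)

definition XX :: "nat \<Rightarrow> nat set topology" where "XX n = alex (SS n)"
definition pp :: "nat \<Rightarrow> nat \<Rightarrow> nat set \<Rightarrow> nat set" where "pp m n = PP m"

lemma XX_good: "weakly_hausdorff (XX n) \<and> compact_space (XX n) \<and> sober (XX n)"
proof (intro conjI)
  show "weakly_hausdorff (XX n)" unfolding XX_def by (rule alex_wh)
  show "compact_space (XX n)" unfolding XX_def
    apply (rule alex_compact[of "{A 0, B 0}"])
      apply simp
     apply (auto simp: SS_def)[1]
    apply (simp add: SS_cases)
    apply (elim disjE exE conjE; simp)
    done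
  show "sober (XX n)" unfolding XX_def
  proof (rule alex_sober)
    fix C assume C: "C \<subseteq> SS n" "C \<noteq> {}"
    show "\<exists>m\<in>C. \<forall>w\<in>C. m \<subseteq> w \<longrightarrow> w = m"
    proof (cases "\<exists>k. Cc k \<in> C")
      case True
      then obtain k where "Cc k \<in> C" by blast
      then show ?thesis using C_max C(1) by blast
    next
      case False
      then have "C \<subseteq> A ` {..n} \<union> B ` {..n}" using C(1) unfolding SS_def by blast
      then have "finite C" by (rule finite_subset) simp
      then show ?thesis using finite_has_maximal[OF _ C(2)] by blast
    qed
  qed
qed

lemma ep: "ep_system UNIV (\<le>) XX pp"
  unfolding ep_system_def proj_system_def
proof (intro conjI ballI allI impI)
  fix i j :: nat assume ij: "i \<le> j"
  show c: "continuous_map (XX j) (XX i) (pp i j)"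
    unfolding XX_def pp_def by (rule alex_cont) (simp_all add: PP_SS PP_mono)
  show "is_projection (XX j) (XX i) (pp i j)"
    unfolding is_projection_def
  proof (intro conjI c exI[of _ id])
    show "continuous_map (XX i) (XX j) id"
      unfolding XX_def by (rule alex_cont) (use SS_mono[OF ij] in auto)
    show "\<forall>x\<in>topspace (XX i). pp i j (id x) = x" unfolding XX_def pp_def by (simp add: PP_id)
    show "\<forall>y\<in>topspace (XX j). spec_le (XX j) (id (pp i j y)) y"
      unfolding XX_def pp_def alex_spec_le alex_topspace
    proof
      fix y assume y: "y \<in> SS j"
      have "PP i y \<in> SS i" using y by (rule PP_SS)
      then have "PP i y \<in> SS j" using SS_mono[OF ij] by (rule subsetD[rotated])
      moreover have "PP i y \<subseteq> y" using y by (rule PP_sub)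
      ultimately show "id (PP i y) \<in> SS j \<and> y \<in> SS j \<and> id (PP i y) \<subseteq> y" using y by simp
    qed
  qed
next
  fix i j k :: nat and x assume "i \<le> j \<and> j \<le> k" "x \<in> topspace (XX k)"
  then show "pp i j (pp j k x) = pp i k x" unfolding XX_def pp_def by (simp add: PP_comp)
next
  fix i :: nat and x assume "x \<in> topspace (XX i)"
  then show "pp i i x = x" unfolding XX_def pp_def by (simp add: PP_id)
next
  fix i j :: nat show "\<exists>k\<in>UNIV. i \<le> k \<and> j \<le> k" by (intro bexI[of _ "max i j"]) auto
qed auto

lemma spec_cont:
  assumes f: "continuous_map X Y f" and s: "spec_le X x z"
  shows "spec_le Y (f x) (f z)"
proof -
  have xz: "x \<in> topspace X" "z \<in> topspace X" "\<And>U. openin X U \<Longrightarrow> x \<in> U \<Longrightarrow> z \<in> U"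
    using s unfolding spec_le_def by auto
  have t: "f x \<in> topspace Y" "f z \<in> topspace Y"
    using continuous_map_image_subset_topspace[OF f] xz(1,2) by auto
  have "f z \<in> U" if "openin Y U" "f x \<in> U" for U
  proof -
    have "openin X {a \<in> topspace X. f a \<in> U}" by (rule openin_continuous_map_preimage[OF f that(1)])
    moreover have "x \<in> {a \<in> topspace X. f a \<in> U}" using xz(1) that(2) by simp
    ultimately have "z \<in> {a \<in> topspace X. f a \<in> U}" by (rule xz(3))
    then show ?thesis by simp
  qed
  then show ?thesis unfolding spec_le_def using t by blast
qed

lemma limit_not_wh: "\<not> weakly_hausdorff (proj_limit UNIV (\<le>) XX pp)"
proof -
  define T where "T = {x \<in> topspace (product_topology XX UNIV). \<forall>i\<in>UNIV. \<forall>j\<in>UNIV. i \<le> j \<longrightarrow> pp i j (x j) = x i}"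
  define L where "L = proj_limit UNIV (\<le>) XX pp"
  have L: "L = subtopology (product_topology XX UNIV) T" unfolding L_def proj_limit_def T_def by simp
  have tsXX: "topspace (XX n) = SS n" for n unfolding XX_def by simp
  have T: "z \<in> T \<longleftrightarrow> (\<forall>n. z n \<in> SS n) \<and> (\<forall>i j. i \<le> j \<longrightarrow> PP i (z j) = z i)" for z
    unfolding T_def pp_def topspace_product_topology tsXX PiE_UNIV_domain by (simp add: Pi_iff)
  have tsL: "topspace L = T" unfolding L T_def by (simp add: topspace_subtopology) blast
  define x where "x = (\<lambda>n. A n)"
  define y where "y = (\<lambda>n. B n)"
  have xT: "x \<in> T" unfolding T x_def by (simp add: A_SS min_def)
  have yT: "y \<in> T" unfolding T y_def by (simp add: B_SS min_def)
  have proj: "continuous_map L (XX n) (\<lambda>w. w n)" for n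
    unfolding L by (rule continuous_map_from_subtopology, rule continuous_map_product_projection) simp
  have empty: "upset L x \<inter> upset L y \<subseteq> {}"
  proof
    fix z assume z: "z \<in> upset L x \<inter> upset L y"
    then have zT: "z \<in> T" and sx: "spec_le L x z" and sy: "spec_le L y z"
      unfolding upset_def tsL by auto
    have "spec_le (XX n) (x n) (z n)" for n using spec_cont[OF proj sx] .
    then have subA: "A n \<subseteq> z n" for n unfolding XX_def alex_spec_le x_def by simp
    have "spec_le (XX n) (y n) (z n)" for n using spec_cont[OF proj sy] .
    then have subB: "B n \<subseteq> z n" for n unfolding XX_def alex_spec_le y_def by simp
    have zC: "\<exists>k\<ge>n. z n = Cc k" for n
    proof -
      have "z n \<in> SS n" using zT unfolding T by simp
      then show ?thesis
      proof (cases rule: SS_E)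
        case (a i) then show ?thesis using subB[of n] by simp
      next
        case (b i) then show ?thesis using subA[of n] by simp
      next
        case (c k) then show ?thesis using subA[of n] by simp
      qed
    qed
    obtain k where k: "z 0 = Cc k" using zC by blast
    obtain k' where k': "k' \<ge> Suc k" "z (Suc k) = Cc k'" using zC by blast
    have "PP 0 (z (Suc k)) = z 0" using zT unfolding T by simp
    then have "k' = k" using k k'(2) by simp
    then show "z \<in> {}" using k'(1) by simp
  qed
  show ?thesis
    unfolding L_def[symmetric] weakly_hausdorff_def
  proof
    assume wh: "\<forall>x\<in>topspace L. \<forall>y\<in>topspace L. \<forall>W. openin L W \<and> upset L x \<inter> upset L y \<subseteq> W \<longrightarrow>
        (\<exists>U V. openin L U \<and> openin L V \<and> x \<in> U \<and> y \<in> V \<and> U \<inter> V \<subseteq> W)"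
    have "\<exists>U V. openin L U \<and> openin L V \<and> x \<in> U \<and> y \<in> V \<and> U \<inter> V \<subseteq> {}"
    proof -
      have "x \<in> topspace L" "y \<in> topspace L" using xT yT tsL by simp_all
      then have "\<forall>W. openin L W \<and> upset L x \<inter> upset L y \<subseteq> W \<longrightarrow>
        (\<exists>U V. openin L U \<and> openin L V \<and> x \<in> U \<and> y \<in> V \<and> U \<inter> V \<subseteq> W)"
        using wh by simp
      then have "openin L {} \<and> upset L x \<inter> upset L y \<subseteq> {} \<longrightarrow>
        (\<exists>U V. openin L U \<and> openin L V \<and> x \<in> U \<and> y \<in> V \<and> U \<inter> V \<subseteq> {})" by (rule spec)
      then show ?thesis using empty by simp
    qed
    then obtain U V where UV: "openin L U" "openin L V" "x \<in> U" "y \<in> V" "U \<inter> V \<subseteq> {}"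
      by blast
    obtain U' where U': "openin (product_topology XX UNIV) U'" "U = U' \<inter> T"
      using UV(1) unfolding L openin_subtopology by blast
    obtain V' where V': "openin (product_topology XX UNIV) V'" "V = V' \<inter> T"
      using UV(2) unfolding L openin_subtopology by blast
    have "x \<in> U'" using UV(3) U'(2) by simp
    then obtain Ux where Ux: "finite {i \<in> UNIV. Ux i \<noteq> topspace (XX i)}" "\<forall>i\<in>UNIV. openin (XX i) (Ux i)"
        "x \<in> PiE UNIV Ux" "PiE UNIV Ux \<subseteq> U'"
      using U'(1) unfolding openin_product_topology_alt by meson
    have "y \<in> V'" using UV(4) V'(2) by simp
    then obtain Uy where Uy: "finite {i \<in> UNIV. Uy i \<noteq> topspace (XX i)}" "\<forall>i\<in>UNIV. openin (XX i) (Uy i)"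
        "y \<in> PiE UNIV Uy" "PiE UNIV Uy \<subseteq> V'"
      using V'(1) unfolding openin_product_topology_alt by meson
    have "finite ({i \<in> UNIV. Ux i \<noteq> topspace (XX i)} \<union> {i \<in> UNIV. Uy i \<noteq> topspace (XX i)})"
      using Ux(1) Uy(1) by simp
    then obtain N where N: "\<And>i. i \<in> {i \<in> UNIV. Ux i \<noteq> topspace (XX i)} \<union> {i \<in> UNIV. Uy i \<noteq> topspace (XX i)} \<Longrightarrow> i \<le> N"
      unfolding finite_nat_set_iff_bounded_le by blast
    define z where "z = (\<lambda>n::nat. Cc N)"
    have zT: "z \<in> T" unfolding T z_def by simp
    have zUx: "z \<in> PiE UNIV Ux"
    proof -
      have "Cc N \<in> Ux i" for i
      proof (cases "Ux i = topspace (XX i)")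
        case True then show ?thesis by (simp add: tsXX)
      next
        case False
        then have iN: "i \<le> N" using N by simp
        have op: "openin (alex (SS i)) (Ux i)" using Ux(2) unfolding XX_def by simp
        have "A i \<in> Ux i" using Ux(3) unfolding x_def PiE_UNIV_domain by (simp add: Pi_iff)
        moreover have "A i \<subseteq> Cc N" using iN by simp
        ultimately show ?thesis using op unfolding alex_open by simp
      qed
      then show ?thesis unfolding z_def PiE_UNIV_domain by (simp add: Pi_iff)
    qed
    have zUy: "z \<in> PiE UNIV Uy"
    proof -
      have "Cc N \<in> Uy i" for i
      proof (cases "Uy i = topspace (XX i)")
        case True then show ?thesis by (simp add: tsXX)
      next
        case False
        then have iN: "i \<le> N" using N by simp
        have op: "openin (alex (SS i)) (Uy i)" using Uy(2) unfolding XX_def by simp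
        have "B i \<in> Uy i" using Uy(3) unfolding y_def PiE_UNIV_domain by (simp add: Pi_iff)
        moreover have "B i \<subseteq> Cc N" using iN by simp
        ultimately show ?thesis using op unfolding alex_open by simp
      qed
      then show ?thesis unfolding z_def PiE_UNIV_domain by (simp add: Pi_iff)
    qed
    have "z \<in> U" using zUx Ux(4) U'(2) zT by blast
    moreover have "z \<in> V" using zUy Uy(4) V'(2) zT by blast
    ultimately show False using UV(5) by blast
  qed
qed

theorem corollary5p5:
  shows "\<not> omega_projective (weakly_hausdorff :: nat set topology \<Rightarrow> bool)
            (weakly_hausdorff :: (nat \<Rightarrow> nat set) topology \<Rightarrow> bool)
       \<and> \<not> omega_projective (\<lambda>X::nat set topology. weakly_hausdorff X \<and> compact_space X)
            (\<lambda>X::(nat \<Rightarrow> nat set) topology. weakly_hausdorff X \<and> compact_space X)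
       \<and> \<not> omega_projective (\<lambda>X::nat set topology. weakly_hausdorff X \<and> sober X)
            (\<lambda>X::(nat \<Rightarrow> nat set) topology. weakly_hausdorff X \<and> sober X)
       \<and> \<not> omega_projective (\<lambda>X::nat set topology. weakly_hausdorff X \<and> compact_space X \<and> sober X)
            (\<lambda>X::(nat \<Rightarrow> nat set) topology. weakly_hausdorff X \<and> compact_space X \<and> sober X)
       \<and> (\<exists>(X :: nat \<Rightarrow> nat set topology) p.
            ep_system UNIV (\<le>) X p \<and>
            (\<forall>n. weakly_hausdorff (X n) \<and> compact_space (X n) \<and> sober (X n)) \<and>
            \<not> weakly_hausdorff (proj_limit UNIV (\<le>) X p))"
proof -
  have ne: "\<exists>D\<subseteq>(UNIV::nat set). countable D \<and> (\<forall>i\<in>UNIV. \<exists>d\<in>D. i \<le> d)"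
    by (intro exI[of _ UNIV]) auto
  have ps: "proj_system UNIV (\<le>) XX pp" using ep unfolding ep_system_def by (rule conjunct1)
  have main: "\<exists>(X :: nat \<Rightarrow> nat set topology) p.
            ep_system UNIV (\<le>) X p \<and>
            (\<forall>n. weakly_hausdorff (X n) \<and> compact_space (X n) \<and> sober (X n)) \<and>
            \<not> weakly_hausdorff (proj_limit UNIV (\<le>) X p)"
    by (intro exI[of _ XX] exI[of _ pp] conjI ep allI XX_good limit_not_wh)
  have gen: "\<not> omega_projective C (C' :: (nat \<Rightarrow> nat set) topology \<Rightarrow> bool)"
    if c: "\<And>n. C (XX n)" and c': "\<And>Y. C' Y \<Longrightarrow> weakly_hausdorff Y" for C C'
  proof
    assume om: "omega_projective C C'"
    have "C' (proj_limit UNIV (\<le>) XX pp)"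
      using om unfolding omega_projective_def
      apply -
      apply (erule allE[where x=UNIV], erule allE[where x="(\<le>)"], erule allE[where x=XX], erule allE[where x=pp])
      apply (erule mp)
      using ps ne c by simp
    then show False using c' limit_not_wh by simp
  qed
  have g1: "\<And>n. weakly_hausdorff (XX n)" "\<And>n. compact_space (XX n)" "\<And>n. sober (XX n)"
    using XX_good by simp_all
  show ?thesis
    apply (intro conjI main)
       apply (rule gen; simp add: g1)
      apply (rule gen; simp add: g1)
     apply (rule gen; simp add: g1)
    apply (rule gen; simp add: g1)
    done
qed

end
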